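(* Let $\alpha\in (0,1)$ be a real number and let $a_1,a_2,\ldots,a_n\in [0,\alpha]$ be reals with $\sum_{\ell=1}^n a_\ell=1$. Then the numbers $a_1,\ldots,a_n$ can be partitioned into $2\lceil 1/\alpha\rceil-1$ (possibly empty) groups such that the sum of the numbers in each group is at most $\alpha$. *)

theory Defs
  imports Complex_Main
begin

end

theory Submission
  imports Defs
begin

lemma pack_aux:
  fixes \<alpha> :: real and a :: "nat \<Rightarrow> real" and N :: nat
  assumes "0 < \<alpha>" and items: "\<And>l. l \<in> {i..<N} \<Longrightarrow> 0 \<le> a l \<and> a l \<le> \<alpha>"
    and "1 \<le> k" and "(\<Sum>l\<in>{i..<N}. a l) \<le> real k * \<alpha>"
  shows "\<exists>g :: nat \<Rightarrow> nat. (\<forall>l\<in>{i..<N}. g l < 2*k-1) \<and>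
           (\<forall>j < 2*k-1. (\<Sum>l\<in>{l\<in>{i..<N}. g l = j}. a l) \<le> \<alpha>)"
  using assms(3,1,2,4)
proof (induction k arbitrary: i rule: nat_induct_at_least)
  case base
  have "(\<lambda>_. 0::nat) l < 2*1-1" for l by simp
  moreover have "{l\<in>{i..<N}. (0::nat) = 0} = {i..<N}" by auto
  ultimately show ?case using base.prems(3) by (intro exI[of _ "\<lambda>_. 0"]) auto
next
  case (Suc k)
  define T where "T = {t. i \<le> t \<and> t \<le> N \<and> (\<Sum>l\<in>{i..<t}. a l) \<le> \<alpha>}"
  have finT: "finite T" unfolding T_def by auto
  show ?case
  proof (cases "i \<le> N")
    case False
    then show ?thesis by (intro exI[of _ "\<lambda>_. 0"]) (auto simp: \<open>0 < \<alpha>\<close> less_imp_le)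
  next
    case iN: True
    have "i \<in> T" unfolding T_def using iN \<open>0 < \<alpha>\<close> by auto
    define t where "t = Max T"
    have tT: "t \<in> T" unfolding t_def using finT \<open>i \<in> T\<close> by (intro Max_in) auto
    have tmax: "\<And>s. s \<in> T \<Longrightarrow> s \<le> t" unfolding t_def using finT by auto
    from tT have it: "i \<le> t" "t \<le> N" "(\<Sum>l\<in>{i..<t}. a l) \<le> \<alpha>" unfolding T_def by auto
    show ?thesis
    proof (cases "t = N")
      case True
      have e0: "{l\<in>{i..<N}. (0::nat) = j} = (if j = 0 then {i..<N} else {})" for j by auto
      show ?thesis
      proof (intro exI[of _ "\<lambda>_. 0"] conjI ballI allI impI)
        fix l show "(0::nat) < 2 * Suc k - 1" using Suc.hyps by simp
      next
        fix j :: nat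
        show "(\<Sum>l\<in>{l\<in>{i..<N}. (0::nat) = j}. a l) \<le> \<alpha>"
          unfolding e0 using it True Suc.prems(1) by simp
      qed
    next
      case False
      hence tN: "t < N" using it by auto
      have "Suc t \<notin> T" using tmax by (meson Suc_n_not_le_n)
      hence big: "(\<Sum>l\<in>{i..<Suc t}. a l) > \<alpha>" unfolding T_def using it tN by auto
      have split: "(\<Sum>l\<in>{i..<N}. a l) = (\<Sum>l\<in>{i..<Suc t}. a l) + (\<Sum>l\<in>{Suc t..<N}. a l)"
        using it tN by (metis Suc_leI le_SucI sum.atLeastLessThan_concat)
      have rem: "(\<Sum>l\<in>{Suc t..<N}. a l) \<le> real k * \<alpha>"
        using split big Suc.prems(3) by (simp add: algebra_simps)
      have "\<exists>g :: nat \<Rightarrow> nat. (\<forall>l\<in>{Suc t..<N}. g l < 2*k-1) \<and>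
           (\<forall>j < 2*k-1. (\<Sum>l\<in>{l\<in>{Suc t..<N}. g l = j}. a l) \<le> \<alpha>)"
        by (rule Suc.IH[of "Suc t"]) (use Suc.prems(1) in simp, use Suc.prems(2) it in simp, rule rem)
      then obtain g' where g1: "\<forall>l\<in>{Suc t..<N}. g' l < 2*k-1"
        and g2: "\<forall>j < 2*k-1. (\<Sum>l\<in>{l\<in>{Suc t..<N}. g' l = j}. a l) \<le> \<alpha>" by blast
      define g where "g l = (if l < t then 0 else if l = t then 1 else g' l + 2)" for l
      have A: "\<forall>l\<in>{i..<N}. g l < 2*Suc k-1"
      proof
        fix l assume l: "l \<in> {i..<N}"
        show "g l < 2*Suc k-1"
        proof (cases "l \<le> t")
          case True then show ?thesis using Suc.hyps unfolding g_def by auto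
        next
          case False
          hence "l \<in> {Suc t..<N}" using l by auto
          hence "g' l < 2*k-1" using g1 by blast
          then show ?thesis using False unfolding g_def by auto
        qed
      qed
      have B: "(\<Sum>l\<in>{l\<in>{i..<N}. g l = j}. a l) \<le> \<alpha>" if jb: "j < 2*Suc k-1" for j
      proof -
        consider "j = 0" | "j = 1" | j' where "j = j' + 2" "j' < 2*k-1"
        proof -
          assume h0: "j = 0 \<Longrightarrow> thesis" and h1: "j = 1 \<Longrightarrow> thesis"
            and h2: "\<And>j'. j = j' + 2 \<Longrightarrow> j' < 2*k-1 \<Longrightarrow> thesis"
          show thesis
          proof (cases "j \<le> 1")
            case True then show ?thesis using h0 h1 by linarith
          next
            case False
            then show ?thesis using h2[of "j - 2"] jb Suc.hyps by simp
          qed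
        qed
        then show ?thesis
        proof cases
          case 1
          have "{l\<in>{i..<N}. g l = j} = {i..<t}" using 1 tN unfolding g_def by auto
          then show ?thesis using it by simp
        next
          case 2
          have "{l\<in>{i..<N}. g l = j} = {t}" using 2 tN it unfolding g_def by auto
          then show ?thesis using Suc.prems(2)[of t] it tN by simp
        next
          case 3
          have "{l\<in>{i..<N}. g l = j} = {l\<in>{Suc t..<N}. g' l = j'}" using 3 it unfolding g_def by auto
          then show ?thesis using g2 3 by simp
        qed
      qed
      show ?thesis using A B by blast
    qed
  qed
qed

theorem lemma6p2:
  fixes \<alpha> :: real and n :: nat and a :: "nat \<Rightarrow> real"
  assumes "0 < \<alpha>" and "\<alpha> < 1"
    and "\<And>l. l \<in> {1..n} \<Longrightarrow> 0 \<le> a l \<and> a l \<le> \<alpha>"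
    and "(\<Sum>l=1..n. a l) = 1"
  shows "\<exists>g :: nat \<Rightarrow> nat.
           (\<forall>l\<in>{1..n}. g l < nat (2 * \<lceil>1 / \<alpha>\<rceil> - 1)) \<and>
           (\<forall>j < nat (2 * \<lceil>1 / \<alpha>\<rceil> - 1). (\<Sum>l\<in>{l\<in>{1..n}. g l = j}. a l) \<le> \<alpha>)"
proof -
  define k where "k = nat \<lceil>1 / \<alpha>\<rceil>"
  have "1 / \<alpha> > 0" using assms(1) by simp
  hence c1: "\<lceil>1 / \<alpha>\<rceil> \<ge> 1" by (simp add: le_ceiling_iff)
  hence k1: "1 \<le> k" unfolding k_def by linarith
  have e: "nat (2 * \<lceil>1 / \<alpha>\<rceil> - 1) = 2*k-1" unfolding k_def using c1 by simp
  have "1 / \<alpha> \<le> real k" unfolding k_def using c1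
    by (metis ceiling_le_iff le_ceiling_iff of_int_of_nat_eq order_refl nat_0_le order_trans zero_le_one of_nat_nat)
  hence "1 \<le> real k * \<alpha>" using assms(1) by (simp add: field_simps)
  moreover have eqs: "{1..n} = {1..<Suc n}" by auto
  ultimately have "\<exists>g :: nat \<Rightarrow> nat. (\<forall>l\<in>{1..<Suc n}. g l < 2*k-1) \<and>
           (\<forall>j < 2*k-1. (\<Sum>l\<in>{l\<in>{1..<Suc n}. g l = j}. a l) \<le> \<alpha>)"
    using assms k1 by (intro pack_aux) auto
  then show ?thesis unfolding e eqs .
qed

end
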